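(* If a normal mode transformation exists, then $\bm{\Omega}$ is positive definite.
   Context: Fix an integer $N\ge 1$, real numbers $v$ with $|v|<1$, $L>0$, $L_{\star}\ge 0$, an integer $M\ge 1$ and real coefficients $c_{1}=1,c_{2},\dots,c_{M}$. Let $F(k)=\sum_{i=1}^{M}(-1)^{i-1}c_{i}L_{\star}^{2i-2}k^{2i-1}$ and $k_{n}=n\pi/L$, and assume $F(k_{n})^{2}\neq v^{2}k_{n}^{2}$ for $n=1,\dots,N$. Put $u_{n}=\sqrt{|F(k_{n})^{2}-v^{2}k_{n}^{2}|}/k_{n}>0$, and $\varepsilon_{n}=1$ if $F(k_{n})^{2}-v^{2}k_{n}^{2}>0$, $\varepsilon_{n}=0$ otherwise. Define $N\times N$ matrices $\bm\sigma,\bm\rho,\bm\xi$ by $\sigma_{nn}=0$, $\sigma_{nm}=\dfrac{2iv\sqrt{nm}\,[1-(-1)^{n+m}]}{\pi\sqrt{u_{n}u_{m}}\,(m^{2}-n^{2})}$ for $n\neq m$, $\bm\rho=\mathrm{diag}(n u_{n}\varepsilon_{n})$, $\bm\xi=\mathrm{diag}(-n u_{n}(1-\varepsilon_{n}))$. With $\mathbf{I}$ the $N\times N$ identity, define the $2N\times 2N$ matrices $\bm{\Sigma}=\begin{pmatrix}\mathbf{I}&\mathbf{0}\\ \mathbf{0}&-\mathbf{I}\end{pmatrix}$, $\bm{\Gamma}=\begin{pmatrix}\mathbf{0}&\mathbf{I}\\ \mathbf{I}&\mathbf{0}\end{pmatrix}$, $\mathbf{R}=\bm{\Sigma}-\begin{pmatrix}\bm\sigma&\bm\sigma\\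 \bm\sigma&\bm\sigma\end{pmatrix}$, $\bm{\Omega}=\begin{pmatrix}\bm\rho&\bm\xi\\ \bm\xi&\bm\rho\end{pmatrix}$. Standing assumption: $\mathbf{R}$ is invertible. Let $\mathbf{D}=\mathbf{R}^{-1}\bm{\Omega}$. Here ${}^{*}$ denotes entrywise complex conjugation and ${}^{\mathrm{H}}$ the conjugate transpose. A normal mode transformation is a $2N\times2N$ matrix $\mathbf{T}$ such that (i) $\mathbf{T}^{\mathrm{H}}\mathbf{R}\mathbf{T}=\bm{\Sigma}$; (ii) $\mathbf{T}=\bm{\Gamma}\mathbf{T}^{*}\bm{\Gamma}$; (iii) $\mathbf{T}^{-1}\mathbf{D}\mathbf{T}=\mathrm{diag}(\mu_{1},\dots,\mu_{N},-\mu_{1},\dots,-\mu_{N})$ for some real numbers $\mu_{n}>0$, where $\mathbf{T}^{-1}=\bm{\Sigma}\mathbf{T}^{\mathrm{H}}\mathbf{R}$. *)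

theory Defs
  imports "HOL-Analysis.Analysis" "Jordan_Normal_Form.Gauss_Jordan_Elimination"
begin

text \<open>Conventions: the paper's index n in 1..N corresponds to the 0-based matrix index n-1.
  All matrices are complex Jordan_Normal_Form matrices.\<close>

definition Fpoly :: "nat \<Rightarrow> (nat \<Rightarrow> real) \<Rightarrow> real \<Rightarrow> real \<Rightarrow> real" where
  "Fpoly M c Ls k = (\<Sum>i=1..M. (-1)^(i-1) * c i * Ls^(2*i-2) * k^(2*i-1))"

definition kn :: "real \<Rightarrow> nat \<Rightarrow> real" where
  "kn L n = real n * pi / L"

definition disc :: "nat \<Rightarrow> (nat \<Rightarrow> real) \<Rightarrow> real \<Rightarrow> real \<Rightarrow> real \<Rightarrow> nat \<Rightarrow> real" where
  "disc M c Ls v L n = (Fpoly M c Ls (kn L n))^2 - v^2 * (kn L n)^2"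

definition un :: "nat \<Rightarrow> (nat \<Rightarrow> real) \<Rightarrow> real \<Rightarrow> real \<Rightarrow> real \<Rightarrow> nat \<Rightarrow> real" where
  "un M c Ls v L n = sqrt \<bar>disc M c Ls v L n\<bar> / kn L n"

definition epsn :: "nat \<Rightarrow> (nat \<Rightarrow> real) \<Rightarrow> real \<Rightarrow> real \<Rightarrow> real \<Rightarrow> nat \<Rightarrow> real" where
  "epsn M c Ls v L n = (if disc M c Ls v L n > 0 then 1 else 0)"

definition sigma_mat :: "nat \<Rightarrow> nat \<Rightarrow> (nat \<Rightarrow> real) \<Rightarrow> real \<Rightarrow> real \<Rightarrow> real \<Rightarrow> complex mat" where
  "sigma_mat N M c Ls v L = mat N N (\<lambda>(i,j).
     if i = j then 0 else
       (let n = i + 1; m = j + 1 in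
        2 * \<i> * complex_of_real v * complex_of_real (sqrt (real (n*m))) * complex_of_real (1 - (-1)^(n+m))
        / complex_of_real (pi * sqrt (un M c Ls v L n * un M c Ls v L m) * (real m ^ 2 - real n ^ 2))))"

definition rho_mat :: "nat \<Rightarrow> nat \<Rightarrow> (nat \<Rightarrow> real) \<Rightarrow> real \<Rightarrow> real \<Rightarrow> real \<Rightarrow> complex mat" where
  "rho_mat N M c Ls v L = mat N N (\<lambda>(i,j).
     if i = j then complex_of_real (real (i+1) * un M c Ls v L (i+1) * epsn M c Ls v L (i+1)) else 0)"

definition xi_mat :: "nat \<Rightarrow> nat \<Rightarrow> (nat \<Rightarrow> real) \<Rightarrow> real \<Rightarrow> real \<Rightarrow> real \<Rightarrow> complex mat" where
  "xi_mat N M c Ls v L = mat N N (\<lambda>(i,j).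
     if i = j then complex_of_real (- real (i+1) * un M c Ls v L (i+1) * (1 - epsn M c Ls v L (i+1))) else 0)"

definition Sigma_mat :: "nat \<Rightarrow> complex mat" where
  "Sigma_mat N = four_block_mat (1\<^sub>m N) (0\<^sub>m N N) (0\<^sub>m N N) (- 1\<^sub>m N)"

definition Gamma_mat :: "nat \<Rightarrow> complex mat" where
  "Gamma_mat N = four_block_mat (0\<^sub>m N N) (1\<^sub>m N) (1\<^sub>m N) (0\<^sub>m N N)"

definition R_mat :: "nat \<Rightarrow> nat \<Rightarrow> (nat \<Rightarrow> real) \<Rightarrow> real \<Rightarrow> real \<Rightarrow> real \<Rightarrow> complex mat" where
  "R_mat N M c Ls v L = Sigma_mat N -
     (let s = sigma_mat N M c Ls v L in four_block_mat s s s s)"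

definition Omega_mat :: "nat \<Rightarrow> nat \<Rightarrow> (nat \<Rightarrow> real) \<Rightarrow> real \<Rightarrow> real \<Rightarrow> real \<Rightarrow> complex mat" where
  "Omega_mat N M c Ls v L =
     four_block_mat (rho_mat N M c Ls v L) (xi_mat N M c Ls v L) (xi_mat N M c Ls v L) (rho_mat N M c Ls v L)"

text \<open>D = R^{-1} Omega (R is assumed invertible, so the inverse exists).\<close>
definition D_mat :: "nat \<Rightarrow> nat \<Rightarrow> (nat \<Rightarrow> real) \<Rightarrow> real \<Rightarrow> real \<Rightarrow> real \<Rightarrow> complex mat" where
  "D_mat N M c Ls v L = the (mat_inverse (R_mat N M c Ls v L)) * Omega_mat N M c Ls v L"

definition mat_conj :: "complex mat \<Rightarrow> complex mat" where
  "mat_conj A = map_mat cnj A"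

definition mat_H :: "complex mat \<Rightarrow> complex mat" where
  "mat_H A = transpose_mat (map_mat cnj A)"

definition normal_mode_transformation ::
  "nat \<Rightarrow> nat \<Rightarrow> (nat \<Rightarrow> real) \<Rightarrow> real \<Rightarrow> real \<Rightarrow> real \<Rightarrow> complex mat \<Rightarrow> bool" where
  "normal_mode_transformation N M c Ls v L T \<longleftrightarrow>
     T \<in> carrier_mat (2*N) (2*N) \<and>
     mat_H T * R_mat N M c Ls v L * T = Sigma_mat N \<and>
     T = Gamma_mat N * mat_conj T * Gamma_mat N \<and>
     (\<exists>\<mu> :: nat \<Rightarrow> real. (\<forall>n<N. \<mu> n > 0) \<and>
        (Sigma_mat N * mat_H T * R_mat N M c Ls v L) * D_mat N M c Ls v L * T
          = mat_diag (2*N) (\<lambda>j. if j < N then complex_of_real (\<mu> j) else - complex_of_real (\<mu> (j - N))))"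

definition pos_def_mat :: "complex mat \<Rightarrow> bool" where
  "pos_def_mat A \<longleftrightarrow> dim_row A = dim_col A \<and> mat_H A = A \<and>
     (\<forall>x \<in> carrier_vec (dim_row A). x \<noteq> 0\<^sub>v (dim_row A) \<longrightarrow>
        (let q = map_vec cnj x \<bullet> (A *\<^sub>v x) in Im q = 0 \<and> Re q > 0))"

end

theory Submission
  imports Defs "Jordan_Normal_Form.Determinant"
begin

lemma ifz_mult: "(if a then (b::complex) else 0) * c = (if a then b * c else 0)"
  by simp

lemma Sigma_diag: "Sigma_mat N = mat_diag (2*N) (\<lambda>j. if j < N then 1 else -1)"
  unfolding Sigma_mat_def mat_diag_def
  by (rule eq_matI) auto

lemma Sigma_carrier[simp]: "Sigma_mat N \<in> carrier_mat (2*N) (2*N)"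
  by (simp add: Sigma_diag)

lemma R_carrier[simp]: "R_mat N M c Ls v L \<in> carrier_mat (2*N) (2*N)"
  unfolding R_mat_def Let_def sigma_mat_def by (auto simp: Sigma_diag mult_2)

lemma Omega_carrier[simp]: "Omega_mat N M c Ls v L \<in> carrier_mat (2*N) (2*N)"
  unfolding Omega_mat_def rho_mat_def xi_mat_def by (auto simp: mult_2)

lemma Omega_herm: "mat_H (Omega_mat N M c Ls v L) = Omega_mat N M c Ls v L"
  unfolding Omega_mat_def rho_mat_def xi_mat_def mat_H_def
  by (rule eq_matI) (auto simp: mult_2)

lemma mat_H_carrier: "T \<in> carrier_mat n m \<Longrightarrow> mat_H T \<in> carrier_mat m n"
  unfolding mat_H_def by auto

lemma Sigma_sq: "Sigma_mat N * Sigma_mat N = 1\<^sub>m (2*N)"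
proof -
  have "Sigma_mat N * Sigma_mat N = mat_diag (2*N) (\<lambda>j. 1)"
    unfolding Sigma_diag mat_diag_diag by (rule arg_cong[where f="mat_diag _"]) auto
  thus ?thesis by simp
qed

theorem lemma5:
  fixes N M :: nat and v L Ls :: real and c :: "nat \<Rightarrow> real"
  assumes "N \<ge> 1" and "\<bar>v\<bar> < 1" and "L > 0" and "Ls \<ge> 0" and "M \<ge> 1" and "c 1 = 1"
    and "\<And>n. 1 \<le> n \<Longrightarrow> n \<le> N \<Longrightarrow> (Fpoly M c Ls (kn L n))^2 \<noteq> v^2 * (kn L n)^2"
    and "invertible_mat (R_mat N M c Ls v L)"
    and "\<exists>T. normal_mode_transformation N M c Ls v L T"
  shows "pos_def_mat (Omega_mat N M c Ls v L)"
proof -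
  define n where "n = 2*N"
  define R where "R = R_mat N M c Ls v L"
  define Om where "Om = Omega_mat N M c Ls v L"
  define Sg where "Sg = Sigma_mat N"
  have Rc: "R \<in> carrier_mat n n" and Oc: "Om \<in> carrier_mat n n" and Sc: "Sg \<in> carrier_mat n n"
    unfolding R_def Om_def Sg_def n_def by auto
  obtain T where nmt: "normal_mode_transformation N M c Ls v L T" using assms(9) by blast
  obtain \<mu> :: "nat \<Rightarrow> real" where mupos: "\<forall>n<N. \<mu> n > 0"
    and Tc: "T \<in> carrier_mat n n" and TRT: "mat_H T * R * T = Sg"
    and eig: "(Sg * mat_H T * R) * D_mat N M c Ls v L * T
          = mat_diag n (\<lambda>j. if j < N then complex_of_real (\<mu> j) else - complex_of_real (\<mu> (j - N)))"
    using nmt unfolding normal_mode_transformation_def R_def Sg_def n_def by blast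
  define H where "H = mat_H T"
  have Hc: "H \<in> carrier_mat n n" using Tc by (simp add: H_def mat_H_carrier)
  obtain B where RB: "R * B = 1\<^sub>m n" and BR: "B * R = 1\<^sub>m (dim_row B)"
    using assms(8) Rc unfolding invertible_mat_def inverts_mat_def R_def by auto
  have Bc: "B \<in> carrier_mat n n"
  proof -
    have "dim_col B = n" using arg_cong[OF RB, of dim_col] Rc by simp
    moreover have "dim_row B = n" using arg_cong[OF BR, of dim_col] Rc by simp
    ultimately show ?thesis by auto
  qed
  have "R \<in> Units (ring_mat TYPE(complex) n ())"
    using Rc Bc RB BR unfolding Units_def ring_mat_def by auto
  then obtain Ri where Ri: "mat_inverse R = Some Ri"
    using mat_inverse(1)[OF Rc, where b="()"] by (cases "mat_inverse R") auto
  have RRi: "R * Ri = 1\<^sub>m n" and Ric: "Ri \<in> carrier_mat n n"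
    using mat_inverse(2)[OF Rc Ri] by auto
  have D: "D_mat N M c Ls v L = Ri * Om"
    unfolding D_mat_def Om_def using Ri R_def by simp
  define Sdiag where "Sdiag = (\<lambda>j::nat. if j < N then (1::complex) else -1)"
  define Lam where "Lam = (\<lambda>j. if j < N then complex_of_real (\<mu> j) else - complex_of_real (\<mu> (j - N)))"
  define P where "P = (\<lambda>j. complex_of_real (\<mu> (if j < N then j else j - N)))"
  have SgD: "Sg = mat_diag n Sdiag" unfolding Sg_def Sdiag_def n_def by (rule Sigma_diag)
  have SgSg: "Sg * Sg = 1\<^sub>m n" unfolding Sg_def n_def by (rule Sigma_sq)
  have key1: "Sg * (H * Om * T) = mat_diag n Lam"
  proof -
    have e: "R * (Ri * (Om * T)) = Om * T"
      using Rc Ric Oc Tc RRi by (simp add: assoc_mult_mat[symmetric, of R n n Ri n "Om * T" n])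
    have "(Sg * H * R) * (Ri * Om) * T = Sg * (H * Om * T)"
      using Sc Hc Rc Ric Oc Tc e
      by (simp add: assoc_mult_mat[of _ n n _ n _ n])
    thus ?thesis using eig D H_def Lam_def by simp
  qed
  have HOT: "H * Om * T = mat_diag n P"
  proof -
    have "H * Om * T = Sg * (Sg * (H * Om * T))"
      using Sc Hc Oc Tc SgSg by (simp add: assoc_mult_mat[symmetric, of Sg n n Sg n "H * (Om * T)" n] assoc_mult_mat[of _ n n _ n _ n])
    also have "\<dots> = mat_diag n P" unfolding key1 unfolding SgD mat_diag_diag
      by (rule arg_cong[where f="mat_diag _"]) (auto simp: Sdiag_def Lam_def P_def)
    finally show ?thesis .
  qed
  define S where "S = Sg * H * R"
  have Sc2: "S \<in> carrier_mat n n" unfolding S_def using Sc Hc Rc by auto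
  have ST: "S * T = 1\<^sub>m n"
  proof -
    have "S * T = Sg * (H * R * T)" unfolding S_def
      using Sc Hc Rc Tc by (simp add: assoc_mult_mat[of _ n n _ n _ n])
    thus ?thesis using TRT SgSg H_def by simp
  qed
  have TS: "T * S = 1\<^sub>m n" by (rule mat_mult_left_right_inverse[OF Sc2 Tc ST])
  show ?thesis
    unfolding pos_def_mat_def
  proof (intro conjI ballI impI)
    show "dim_row (Omega_mat N M c Ls v L) = dim_col (Omega_mat N M c Ls v L)" by (metis carrier_matD Omega_carrier)
    show "mat_H (Omega_mat N M c Ls v L) = Omega_mat N M c Ls v L" by (rule Omega_herm)
  next
    fix x :: "complex vec" assume xc0: "x \<in> carrier_vec (dim_row (Omega_mat N M c Ls v L))"
      and xn0: "x \<noteq> 0\<^sub>v (dim_row (Omega_mat N M c Ls v L))"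
    have xc: "x \<in> carrier_vec n" using xc0 Oc Om_def by simp
    have xn: "x \<noteq> 0\<^sub>v n" using xn0 Oc Om_def by simp
    define y where "y = S *\<^sub>v x"
    have yc: "y \<in> carrier_vec n" unfolding y_def using mult_mat_vec_carrier[OF Sc2 xc] .
    have xTy: "x = T *\<^sub>v y"
    proof -
      have "T *\<^sub>v y = (T * S) *\<^sub>v x" unfolding y_def
        using assoc_mult_mat_vec[OF Tc Sc2 xc] by simp
      thus ?thesis using TS xc by simp
    qed
    have yn: "y \<noteq> 0\<^sub>v n"
    proof
      assume y0: "y = 0\<^sub>v n"
      have "T *\<^sub>v 0\<^sub>v n = 0\<^sub>v n" using Tc by (intro eq_vecI) (auto simp: scalar_prod_def)
      thus False using xn xTy y0 by simp
    qed
    have cx: "map_vec cnj x = transpose_mat H *\<^sub>v map_vec cnj y"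
    proof -
      have tH: "transpose_mat H = map_mat cnj T" unfolding H_def mat_H_def by simp
      show ?thesis unfolding tH xTy
      proof (rule eq_vecI)
        show "dim_vec (map_vec cnj (T *\<^sub>v y)) = dim_vec (map_mat cnj T *\<^sub>v map_vec cnj y)" by simp
        fix i assume "i < dim_vec (map_mat cnj T *\<^sub>v map_vec cnj y)"
        hence i: "i < n" using Tc by simp
        show "map_vec cnj (T *\<^sub>v y) $ i = (map_mat cnj T *\<^sub>v map_vec cnj y) $ i"
          using i Tc yc by (simp add: scalar_prod_def)
      qed
    qed
    have "map_vec cnj x \<bullet> (Om *\<^sub>v x) = map_vec cnj y \<bullet> (H *\<^sub>v (Om *\<^sub>v (T *\<^sub>v y)))"
      unfolding cx unfolding xTy
      by (rule transpose_vec_mult_scalar[of H n n]) (use Hc Oc Tc yc in auto)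
    also have "\<dots> = map_vec cnj y \<bullet> (mat_diag n P *\<^sub>v y)"
    proof -
      have OTc: "Om * T \<in> carrier_mat n n" using Oc Tc by simp
      have "(H * Om * T) *\<^sub>v y = H *\<^sub>v ((Om * T) *\<^sub>v y)"
        using assoc_mult_mat_vec[OF Hc OTc yc] assoc_mult_mat[OF Hc Oc Tc] by simp
      also have "\<dots> = H *\<^sub>v (Om *\<^sub>v (T *\<^sub>v y))"
        using assoc_mult_mat_vec[OF Oc Tc yc] by simp
      finally show ?thesis using HOT by simp
    qed
    also have "\<dots> = complex_of_real (\<Sum>j\<in>{0..<n}. \<mu> (if j < N then j else j - N) * (cmod (y $ j))^2)"
    proof -
      have md: "mat_diag n P *\<^sub>v y = vec n (\<lambda>i. P i * y $ i)"
        by (rule eq_vecI) (use yc in \<open>auto simp: mat_diag_def scalar_prod_def ifz_mult sum.delta\<close>)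
      have "map_vec cnj y \<bullet> (mat_diag n P *\<^sub>v y) = (\<Sum>j\<in>{0..<n}. cnj (y $ j) * (P j * y $ j))"
        unfolding md scalar_prod_def using yc by simp
      also have "\<dots> = (\<Sum>j\<in>{0..<n}. complex_of_real (\<mu> (if j < N then j else j - N) * (cmod (y $ j))^2))"
      proof (rule sum.cong)
        fix j
        have "cnj (y $ j) * (P j * y $ j) = P j * (y $ j * cnj (y $ j))" by (simp add: ac_simps)
        also have "\<dots> = complex_of_real (\<mu> (if j < N then j else j - N) * (cmod (y $ j))^2)"
          unfolding complex_norm_square[symmetric] P_def by simp
        finally show "cnj (y $ j) * (P j * y $ j) = complex_of_real (\<mu> (if j < N then j else j - N) * (cmod (y $ j))^2)" .
      qed simp
      finally show ?thesis by simp
    qed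
    finally have q: "map_vec cnj x \<bullet> (Om *\<^sub>v x) = complex_of_real (\<Sum>j\<in>{0..<n}. \<mu> (if j < N then j else j - N) * (cmod (y $ j))^2)" .
    obtain j where j: "j < n" "y $ j \<noteq> 0"
    proof -
      have "\<not> (\<forall>j<n. y $ j = 0)"
      proof
        assume a: "\<forall>j<n. y $ j = 0"
        have "y = 0\<^sub>v n" using yc a by (intro eq_vecI) auto
        with yn show False ..
      qed
      thus ?thesis using that by blast
    qed
    have "(\<Sum>j\<in>{0..<n}. \<mu> (if j < N then j else j - N) * (cmod (y $ j))^2) > 0"
    proof (rule sum_pos2[where i=j])
      have mu_ix: "\<mu> (if i < N then i else i - N) > 0" if "i < n" for i
        using that mupos by (auto simp: n_def)
      show "0 < \<mu> (if j < N then j else j - N) * (cmod (y $ j))\<^sup>2"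
        using j mu_ix[of j] by simp
      show "0 \<le> \<mu> (if i < N then i else i - N) * (cmod (y $ i))\<^sup>2" if "i \<in> {0..<n}" for i
        using mu_ix[of i] that by simp
    qed (use j in auto)
    then show "let q = map_vec cnj x \<bullet> (Omega_mat N M c Ls v L *\<^sub>v x) in Im q = 0 \<and> 0 < Re q"
      using q Om_def by simp
  qed
qed

end
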